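(* Let $R$ be a nonzero polynomial, $m\ge1$ an integer and $\alpha\in\mathbb{C}$ such that $Q(z)=\frac{R(z)}{(z-\alpha)^m}$ is not a polynomial (i.e. $Q$ has a pole at $\alpha$). Then for every $r>0$, the open disk $\{|z|<r\}$ contains no zeroes of $Q^{(n)}$ for all sufficiently large $n$. *)

theory Defs
  imports "HOL-Complex_Analysis.Complex_Analysis" "HOL-Computational_Algebra.Polynomial"
begin

end

theory Submission
  imports Defs
begin

definition ffr :: "int \<Rightarrow> nat \<Rightarrow> real" where
  "ffr e n = (\<Prod>i<n. real_of_int e - real i)"

lemma ffr_Suc: "ffr e (Suc n) = ffr e n * (real_of_int e - real n)"
  by (simp add: ffr_def)

lemma ffr_zero: "e \<ge> 0 \<Longrightarrow> nat e < n \<Longrightarrow> ffr e n = 0"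
  unfolding ffr_def by (rule prod_zero) (auto intro!: bexI[of _ "nat e"])

lemma ffr_neg: "e < 0 \<Longrightarrow> \<bar>ffr e n\<bar> = pochhammer (real_of_int (-e)) n"
  unfolding ffr_def pochhammer_prod abs_prod
  by (rule prod.cong) auto

lemma poch_mono: "0 \<le> a \<Longrightarrow> a \<le> b \<Longrightarrow> pochhammer (a::real) n \<le> pochhammer b n"
  unfolding pochhammer_prod by (rule prod_mono) auto

lemma poch_pos: "0 < a \<Longrightarrow> pochhammer (a::real) n > 0"
  unfolding pochhammer_prod by (rule prod_pos) auto

lemma poch_rel: "pochhammer (a::real) n * (a + real n) = a * pochhammer (a+1) n"
  using pochhammer_rec[of a n] pochhammer_rec'[of a n] by (simp add: algebra_simps)

definition gfun :: "(nat \<Rightarrow> complex) \<Rightarrow> nat \<Rightarrow> nat \<Rightarrow> complex \<Rightarrow> nat \<Rightarrow> complex \<Rightarrow> complex" where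
  "gfun b d K \<alpha> n z = (\<Sum>j\<le>d. b j * of_real (ffr (int j - int K) n) * (z - \<alpha>) powi (int j - int K - int n))"

lemma gfun_deriv:
  assumes "z \<noteq> \<alpha>"
  shows "(gfun b d K \<alpha> n has_field_derivative gfun b d K \<alpha> (Suc n) z) (at z)"
proof -
  have P: "((\<lambda>z. (z - \<alpha>) powi e) has_field_derivative of_int e * (z - \<alpha>) powi (e - 1)) (at z)" for e
    using assms by (auto intro!: derivative_eq_intros)
  have T: "((\<lambda>z. b j * of_real (ffr (int j - int K) n) * (z - \<alpha>) powi (int j - int K - int n))
     has_field_derivative (b j * of_real (ffr (int j - int K) (Suc n)) * (z - \<alpha>) powi (int j - int K - int (Suc n)))) (at z)" for j
  proof -
    have D: "((\<lambda>z. b j * of_real (ffr (int j - int K) n) * (z - \<alpha>) powi (int j - int K - int n))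
     has_field_derivative (b j * of_real (ffr (int j - int K) n) * (of_int (int j - int K - int n) * (z - \<alpha>) powi (int j - int K - int n - 1)))) (at z)"
      by (rule DERIV_cmult[OF P])
    have eq: "b j * of_real (ffr (int j - int K) n) * (of_int (int j - int K - int n) * (z - \<alpha>) powi (int j - int K - int n - 1))
       = b j * of_real (ffr (int j - int K) (Suc n)) * (z - \<alpha>) powi (int j - int K - int (Suc n))"
      by (simp add: ffr_Suc algebra_simps)
    show ?thesis unfolding eq[symmetric] by (rule D)
  qed
  show ?thesis unfolding gfun_def[abs_def]
    by (rule DERIV_sum) (rule T)
qed

lemma higher_gfun:
  assumes "\<And>z. z \<noteq> \<alpha> \<Longrightarrow> f z = gfun b d K \<alpha> 0 z"
  shows "z \<noteq> \<alpha> \<Longrightarrow> (deriv ^^ n) f z = gfun b d K \<alpha> n z"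
proof (induction n arbitrary: z)
  case 0 then show ?case using assms by simp
next
  case (Suc n)
  have ev: "\<forall>\<^sub>F x in nhds z. (deriv ^^ n) f x = gfun b d K \<alpha> n x"
  proof -
    have "\<forall>\<^sub>F x in nhds z. x \<in> -{\<alpha>}"
      using Suc.prems by (intro eventually_nhds_in_open) auto
    then show ?thesis by eventually_elim (use Suc.IH in auto)
  qed
  have "(deriv ^^ Suc n) f z = deriv ((deriv ^^ n) f) z" by simp
  also have "\<dots> = deriv (gfun b d K \<alpha> n) z"
    by (rule deriv_cong_ev[OF ev refl])
  also have "\<dots> = gfun b d K \<alpha> (Suc n) z"
    by (rule DERIV_imp_deriv[OF gfun_deriv[OF Suc.prems]])
  finally show ?case .
qed

lemma poch_nonneg: "0 \<le> a \<Longrightarrow> pochhammer (a::real) n \<ge> 0"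
  unfolding pochhammer_prod by (rule prod_nonneg) auto

lemma gfun_nz:
  fixes b :: "nat \<Rightarrow> complex"
  assumes K1: "K \<ge> 1" and b0: "b 0 \<noteq> 0" and z: "z \<noteq> \<alpha>" and wB: "cmod (z - \<alpha>) \<le> B"
    and nd: "n > d" and nC: "real n * cmod (b 0) > (\<Sum>j\<in>{..d}-{0}. cmod (b j) * B^j) * real K"
  shows "gfun b d K \<alpha> n z \<noteq> 0"
proof -
  define w where "w = z - \<alpha>"
  have w0: "w \<noteq> 0" using z by (simp add: w_def)
  define C where "C = (\<Sum>j\<in>{..d}-{0}. cmod (b j) * B^j)"
  have B0: "B \<ge> 0" using wB norm_ge_zero order_trans by blast
  define T where "T = (\<Sum>j\<le>d. b j * of_real (ffr (int j - int K) n) * w^j)"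
  define T1 where "T1 = (\<Sum>j\<in>{..d}-{0}. b j * of_real (ffr (int j - int K) n) * w^j)"
  have gT: "gfun b d K \<alpha> n z = T * w powi (- int K - int n)"
    unfolding gfun_def T_def sum_distrib_right w_def[symmetric]
  proof (rule sum.cong[OF refl])
    fix j assume "j \<in> {..d}"
    have "w powi (int j - int K - int n) = w powi (int j + (- int K - int n))" by (simp add: algebra_simps)
    also have "\<dots> = w^j * w powi (- int K - int n)" using w0 by (simp add: power_int_add)
    finally show "b j * of_real (ffr (int j - int K) n) * w powi (int j - int K - int n) =
          b j * of_real (ffr (int j - int K) n) * w ^ j * w powi (- int K - int n)" by simp
  qed
  have TT: "T = b 0 * of_real (ffr (- int K) n) + T1"
    unfolding T_def T1_def by (subst sum.remove[of _ 0]) auto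
  have fb: "\<bar>ffr (int j - int K) n\<bar> \<le> pochhammer (real K - 1) n" if j: "j \<in> {..d}-{0}" for j
  proof (cases "int j \<ge> int K")
    case True
    have "ffr (int j - int K) n = 0" using True j nd by (intro ffr_zero) auto
    then show ?thesis using K1 by (simp add: poch_nonneg)
  next
    case False
    then have "\<bar>ffr (int j - int K) n\<bar> = pochhammer (real_of_int (- (int j - int K))) n"
      by (intro ffr_neg) auto
    also have "\<dots> \<le> pochhammer (real K - 1) n"
      using False j by (intro poch_mono) auto
    finally show ?thesis .
  qed
  have T1b: "cmod T1 \<le> C * pochhammer (real K - 1) n"
  proof -
    have "cmod T1 \<le> (\<Sum>j\<in>{..d}-{0}. cmod (b j * of_real (ffr (int j - int K) n) * w^j))"
      unfolding T1_def by (rule norm_sum)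
    also have "\<dots> \<le> (\<Sum>j\<in>{..d}-{0}. cmod (b j) * B^j * pochhammer (real K - 1) n)"
    proof (rule sum_mono)
      fix j assume j: "j \<in> {..d}-{0}"
      have "cmod (b j * of_real (ffr (int j - int K) n) * w^j) = cmod (b j) * \<bar>ffr (int j - int K) n\<bar> * cmod w ^ j"
        by (simp add: norm_mult norm_power)
      also have "\<dots> \<le> cmod (b j) * pochhammer (real K - 1) n * B ^ j"
        using fb[OF j] wB w_def
        by (intro mult_mono power_mono mult_left_mono) (auto simp: poch_nonneg K1)
      finally show "cmod (b j * of_real (ffr (int j - int K) n) * w^j) \<le> cmod (b j) * B^j * pochhammer (real K - 1) n"
        by (simp add: algebra_simps)
    qed
    also have "\<dots> = C * pochhammer (real K - 1) n"
      unfolding C_def by (simp add: sum_distrib_right)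
    finally show ?thesis .
  qed
  have pK: "pochhammer (real K) n > 0" using K1 by (intro poch_pos) auto
  have fK: "\<bar>ffr (- int K) n\<bar> = pochhammer (real K) n" using ffr_neg[of "- int K" n] K1 by simp
  have rel: "pochhammer (real K - 1) n * (real K - 1 + real n) = (real K - 1) * pochhammer (real K) n"
    using poch_rel[of "real K - 1" n] by simp
  have C0: "C \<ge> 0" unfolding C_def using B0 by (intro sum_nonneg) auto
  have key: "C * pochhammer (real K - 1) n < cmod (b 0) * pochhammer (real K) n"
  proof -
    have pos: "real K - 1 + real n > 0" using nd K1 by simp
    have "C * pochhammer (real K - 1) n * (real K - 1 + real n) = C * (real K - 1) * pochhammer (real K) n"
      using arg_cong[OF rel, of "\<lambda>x. C * x"] by (simp only: mult.assoc)
    also have "\<dots> < cmod (b 0) * (real K - 1 + real n) * pochhammer (real K) n"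
    proof (rule mult_strict_right_mono[OF _ pK])
      have "C * (real K - 1) \<le> C * real K" using C0 by (simp add: mult_left_mono)
      also have "\<dots> < real n * cmod (b 0)" using nC C_def by simp
      also have "\<dots> \<le> cmod (b 0) * (real K - 1 + real n)"
        using K1 mult_right_mono[of 1 "real K" "cmod (b 0)"] by (simp add: algebra_simps)
      finally show "C * (real K - 1) < cmod (b 0) * (real K - 1 + real n)" .
    qed
    finally have "C * pochhammer (real K - 1) n * (real K - 1 + real n) < cmod (b 0) * pochhammer (real K) n * (real K - 1 + real n)"
      by (simp add: algebra_simps)
    then show ?thesis using pos by (simp add: mult_less_cancel_right)
  qed
  have "T \<noteq> 0"
  proof
    assume "T = 0"
    then have "b 0 * of_real (ffr (- int K) n) = - T1" using TT by (simp add: eq_neg_iff_add_eq_0)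
    then have "cmod (b 0) * pochhammer (real K) n = cmod T1"
      by (metis fK norm_minus_cancel norm_mult norm_of_real)
    with T1b key show False by simp
  qed
  then show ?thesis using gT w0 by simp
qed

theorem lemma4p8:
  fixes R :: "complex poly" and m :: nat and \<alpha> :: complex
  assumes "R \<noteq> 0" and "m \<ge> 1"
    and "\<not> (\<exists>p :: complex poly. \<forall>z. z \<noteq> \<alpha> \<longrightarrow> poly R z / (z - \<alpha>) ^ m = poly p z)"
  shows "\<forall>r>0. \<forall>\<^sub>F n in sequentially. \<forall>z. cmod z < r \<and> z \<noteq> \<alpha> \<longrightarrow>
           (deriv ^^ n) (\<lambda>w. poly R w / (w - \<alpha>) ^ m) z \<noteq> 0"
proof (intro allI impI)
  fix r :: real assume r: "r > 0"
  define k where "k = order \<alpha> R"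
  obtain q where Rq: "R = [:-\<alpha>,1:]^k * q" and ndv: "\<not> [:-\<alpha>,1:] dvd q"
    using order_decomp[OF assms(1)] k_def by blast
  have qa: "poly q \<alpha> \<noteq> 0" using ndv poly_eq_0_iff_dvd by blast
  have polyR: "poly R z = (z - \<alpha>)^k * poly q z" for z using Rq by simp
  have km: "k < m"
  proof (rule ccontr)
    assume "\<not> k < m"
    then have kk: "k = (k - m) + m" by simp
    have "\<forall>z. z \<noteq> \<alpha> \<longrightarrow> poly R z / (z-\<alpha>)^m = poly ([:-\<alpha>,1:]^(k-m) * q) z"
    proof (intro allI impI)
      fix z assume "z \<noteq> \<alpha>"
      then have "(z-\<alpha>)^m \<noteq> 0" by simp
      moreover have "poly R z = (z-\<alpha>)^(k-m) * poly q z * (z-\<alpha>)^m"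
        using polyR[of z] kk by (metis mult.assoc mult.commute power_add)
      ultimately show "poly R z / (z-\<alpha>)^m = poly ([:-\<alpha>,1:]^(k-m) * q) z"
        by simp
    qed
    with assms(3) show False by blast
  qed
  define K where "K = m - k"
  have K1: "K \<ge> 1" using km K_def by simp
  have mkK: "m = k + K" using km K_def by simp
  define S where "S = pcompose q [:\<alpha>,1:]"
  define b where "b = coeff S"
  define d where "d = degree S"
  have polyS: "poly q z = (\<Sum>j\<le>d. b j * (z-\<alpha>)^j)" for z
  proof -
    have "poly q z = poly S (z - \<alpha>)" by (simp add: S_def poly_pcompose)
    then show ?thesis by (simp add: poly_altdef b_def d_def)
  qed
  have b0: "b 0 \<noteq> 0"
  proof -
    have "b 0 = poly S 0" by (simp add: b_def poly_0_coeff_0)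
    also have "\<dots> = poly q \<alpha>" by (simp add: S_def poly_pcompose)
    finally show ?thesis using qa by simp
  qed
  have g0: "poly R z / (z-\<alpha>)^m = gfun b d K \<alpha> 0 z" if z: "z \<noteq> \<alpha>" for z
  proof -
    have w0: "z - \<alpha> \<noteq> 0" using z by simp
    have "poly R z / (z-\<alpha>)^m = poly q z / (z-\<alpha>)^K"
      using w0 by (simp add: polyR mkK power_add)
    also have "\<dots> = (\<Sum>j\<le>d. b j * ((z-\<alpha>)^j / (z-\<alpha>)^K))"
      by (simp add: polyS sum_divide_distrib)
    also have "\<dots> = gfun b d K \<alpha> 0 z"
      unfolding gfun_def
    proof (rule sum.cong[OF refl])
      fix j
      have "(z - \<alpha>) powi (int j - int K - int 0) = (z-\<alpha>) powi (int j) / (z-\<alpha>) powi (int K)"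
        using w0 by (simp add: power_int_diff)
      then show "b j * ((z - \<alpha>) ^ j / (z - \<alpha>) ^ K) =
         b j * of_real (ffr (int j - int K) 0) * (z - \<alpha>) powi (int j - int K - int 0)"
        by (simp add: ffr_def)
    qed
    finally show ?thesis .
  qed
  have hd: "(deriv ^^ n) (\<lambda>w. poly R w / (w - \<alpha>) ^ m) z = gfun b d K \<alpha> n z" if "z \<noteq> \<alpha>" for n z
    by (rule higher_gfun[OF _ that]) (rule g0)
  define B where "B = r + cmod \<alpha>"
  define C where "C = (\<Sum>j\<in>{..d}-{0}. cmod (b j) * B^j)"
  define N where "N = nat \<lceil>C * real K / cmod (b 0)\<rceil> + d + 1"
  show "\<forall>\<^sub>F n in sequentially. \<forall>z. cmod z < r \<and> z \<noteq> \<alpha> \<longrightarrow>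
           (deriv ^^ n) (\<lambda>w. poly R w / (w - \<alpha>) ^ m) z \<noteq> 0"
    unfolding eventually_sequentially
  proof (intro exI allI impI)
    fix n z assume nN: "N \<le> n" and zz: "cmod z < r \<and> z \<noteq> \<alpha>"
    have nd: "n > d" using nN N_def by simp
    have pb: "cmod (b 0) > 0" using b0 by simp
    have "C * real K / cmod (b 0) \<le> real (nat \<lceil>C * real K / cmod (b 0)\<rceil>)" by linarith
    also have "\<dots> < real n" using nN N_def by simp
    finally have "C * real K < real n * cmod (b 0)" using pb by (simp add: divide_less_eq)
    moreover have "cmod (z - \<alpha>) \<le> B" unfolding B_def
      using norm_triangle_ineq4[of z \<alpha>] zz by simp
    ultimately have "gfun b d K \<alpha> n z \<noteq> 0"
      using gfun_nz[of K b z \<alpha> B d n] K1 b0 zz nd C_def by simp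
    then show "(deriv ^^ n) (\<lambda>w. poly R w / (w - \<alpha>) ^ m) z \<noteq> 0"
      using hd zz by simp
  qed
qed

end
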